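(* For each non-negative integer $\lambda$, there are either no regular Stanley sequences with character $\lambda$, or else infinitely many.
   Context: A set of non-negative integers is 3-free if no three of its elements form an arithmetic progression. For a finite 3-free set $A=\{a_0<\cdots<a_k\}$ of non-negative integers, the Stanley sequence $S(A)=(a_n)_{n\ge0}$ is the increasing sequence with initial terms $a_0,\ldots,a_k$ in which each subsequent $a_{n+1}$ is the smallest integer greater than $a_n$ such that $\{a_0,\ldots,a_{n+1}\}$ is 3-free. Throughout, Stanley sequences are in root position ($a_0=0$). A Stanley sequence $(a_n)$ is independent with character $\lambda$ if for all sufficiently large $k$: $a_{2^k+i}=a_{2^k}+a_i$ for $0\le i<2^k$, and $a_{2^k}=2a_{2^k-1}-\lambda+1$. A Stanley sequence $(a_n)$ is regular with character $\lambda$ if there exist a constant $\sigma$ and an independent Stanley sequence $(a'_n)$ of character $\lambda$ such that for all large $k$ and $0\le i<2^k$: $a_{2^k-\sigma+i}=a_{2^k-\sigma}+a'_i$ and $a_{2^k-\sigma}=2a_{2^k-\sigma-1}-\lambda+1$ (these data are unique). *)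

theory Defs
  imports Main
begin

definition three_free :: "nat set \<Rightarrow> bool" where
  "three_free S \<longleftrightarrow> (\<forall>x\<in>S. \<forall>y\<in>S. \<forall>z\<in>S. x < y \<and> y < z \<longrightarrow> x + z \<noteq> 2 * y)"

text \<open>Stanley sequence in root position: a = S(A) for the finite 3-free set
  A = {a 0, ..., a k} with a 0 = 0; every later term is the least integer exceeding the
  previous term that keeps the set of terms 3-free.\<close>
definition stanley :: "(nat \<Rightarrow> nat) \<Rightarrow> bool" where
  "stanley a \<longleftrightarrow> a 0 = 0 \<and> strict_mono a \<and>
     (\<exists>k. three_free (a ` {..k}) \<and>
        (\<forall>n\<ge>k. a (Suc n) = (LEAST m. a n < m \<and> three_free (insert m (a ` {..n})))))"

definition independent :: "(nat \<Rightarrow> nat) \<Rightarrow> int \<Rightarrow> bool" where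
  "independent a lam \<longleftrightarrow> (\<exists>K. \<forall>k\<ge>K.
      (\<forall>i<2^k. a (2^k + i) = a (2^k) + a i) \<and>
      int (a (2^k)) = 2 * int (a (2^k - 1)) - lam + 1)"

definition regular :: "(nat \<Rightarrow> nat) \<Rightarrow> int \<Rightarrow> bool" where
  "regular a lam \<longleftrightarrow> (\<exists>(sigma::int) a'. stanley a' \<and> independent a' lam \<and>
     (\<exists>K. \<forall>k\<ge>K.
        (\<forall>i<2^k. a (nat (2^k - sigma + int i)) = a (nat (2^k - sigma)) + a' i) \<and>
        int (a (nat (2^k - sigma))) = 2 * int (a (nat (2^k - sigma - 1))) - lam + 1))"

end

theory Submission
  imports Defs "HOL-Library.Discrete_Functions"
begin


lemma tf_subset: "three_free S \<Longrightarrow> T \<subseteq> S \<Longrightarrow> three_free T"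
  unfolding three_free_def by blast

lemma tf_insert_big:
  assumes "three_free S" "\<forall>x\<in>S. 2 * x < m"
  shows "three_free (insert m S)"
  unfolding three_free_def
proof (intro ballI impI)
  fix x y z assume xyz: "x \<in> insert m S" "y \<in> insert m S" "z \<in> insert m S" "x < y \<and> y < z"
  show "x + z \<noteq> 2 * y"
  proof (cases "z = m")
    case True
    hence "y \<in> S" using xyz by auto
    thus ?thesis using assms(2) True by fastforce
  next
    case False
    hence zS: "z \<in> S" using xyz by auto
    hence "z < m" using assms(2) by fastforce
    hence "y \<in> S" "x \<in> S" using xyz by auto
    thus ?thesis using assms(1) zS xyz unfolding three_free_def by blast
  qed
qed


lemma stanley_tf_prefix:
  assumes "stanley a"
  shows "three_free (a ` {..n})"
proof -
  from assms obtain k where k: "three_free (a ` {..k})"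
    "\<forall>n\<ge>k. a (Suc n) = (LEAST m. a n < m \<and> three_free (insert m (a ` {..n})))"
    unfolding stanley_def by blast
  show ?thesis
  proof (induction n)
    case 0
    then show ?case by (rule tf_subset[OF k(1)]) auto
  next
    case (Suc n)
    show ?case
    proof (cases "Suc n \<le> k")
      case True
      show ?thesis using True by (intro tf_subset[OF k(1)]) auto
    next
      case False
      hence nk: "n \<ge> k" by simp
      define m0 where "m0 = Suc (2 * Max (a ` {..n}))"
      have fin: "finite (a ` {..n})" by simp
      have all: "\<forall>x\<in>a ` {..n}. 2 * x < m0"
      proof
        fix x assume "x \<in> a ` {..n}"
        hence "x \<le> Max (a ` {..n})" using Max_ge[OF fin] by blast
        thus "2 * x < m0" unfolding m0_def by simp
      qed
      have "2 * a n < m0" using all by simp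
      hence ex: "a n < m0 \<and> three_free (insert m0 (a ` {..n}))"
        using tf_insert_big[OF Suc.IH all] by simp
      have "a n < a (Suc n) \<and> three_free (insert (a (Suc n)) (a ` {..n}))"
        unfolding k(2)[rule_format, OF nk] by (rule LeastI_ex) (use ex in blast)
      moreover have "a ` {..Suc n} = insert (a (Suc n)) (a ` {..n})"
        by (auto simp: atMost_Suc)
      ultimately show ?thesis by simp
    qed
  qed
qed

lemma stanley_tf:
  assumes "stanley a"
  shows "three_free (range a)"
  unfolding three_free_def
proof (intro ballI impI)
  fix x y z assume xyz: "x \<in> range a" "y \<in> range a" "z \<in> range a" "x < y \<and> y < z"
  then obtain i j l where ijl: "x = a i" "y = a j" "z = a l" by blast
  let ?n = "max i (max j l)"
  have "three_free (a ` {..?n})" by (rule stanley_tf_prefix[OF assms])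
  moreover have "x \<in> a ` {..?n}" "y \<in> a ` {..?n}" "z \<in> a ` {..?n}" using ijl by auto
  ultimately show "x + z \<noteq> 2 * y" using xyz(4) unfolding three_free_def by blast
qed


lemma not_tf: "\<not> three_free S \<Longrightarrow> \<exists>x y z. x\<in>S \<and> y\<in>S \<and> z\<in>S \<and> x<y \<and> y<z \<and> x+z = 2*y"
  unfolding three_free_def by auto

lemma tfD: "three_free S \<Longrightarrow> x\<in>S \<Longrightarrow> y\<in>S \<Longrightarrow> z\<in>S \<Longrightarrow> x<y \<Longrightarrow> y<z \<Longrightarrow> x+z = 2*y \<Longrightarrow> False"
  unfolding three_free_def by blast

lemma strict_mono_ge_id: "strict_mono (f::nat\<Rightarrow>nat) \<Longrightarrow> n \<le> f n"
  by (simp add: strict_mono_imp_increasing)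

lemma stanley_cov:
  assumes "stanley a"
  shows "\<exists>k0. \<forall>m. a k0 < m \<and> m \<notin> range a \<longrightarrow>
           (\<exists>x y. x \<in> range a \<and> y \<in> range a \<and> x < y \<and> y < m \<and> x + m = 2 * y)"
proof -
  from assms obtain k where k: "strict_mono a"
    "\<forall>n\<ge>k. a (Suc n) = (LEAST m. a n < m \<and> three_free (insert m (a ` {..n})))"
    unfolding stanley_def by blast
  show ?thesis
  proof (rule exI[of _ k], intro allI impI)
    fix m assume m: "a k < m \<and> m \<notin> range a"
    define n where "n = Max {i. a i < m}"
    have fin: "finite {i. a i < m}"
    proof (rule finite_subset[of _ "{..<m}"])
      show "{i. a i < m} \<subseteq> {..<m}"
      proof
        fix i assume "i \<in> {i. a i < m}"
        moreover have "i \<le> a i" by (rule strict_mono_ge_id[OF k(1)])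
        ultimately show "i \<in> {..<m}" by simp
      qed
    qed simp
    have kin: "k \<in> {i. a i < m}" using m by simp
    have ne: "{i. a i < m} \<noteq> {}" using kin by blast
    have "n \<in> {i. a i < m}" unfolding n_def by (rule Max_in[OF fin ne])
    hence nin: "a n < m" by simp
    have kn: "k \<le> n" unfolding n_def by (rule Max_ge[OF fin kin])
    have "\<not> a (Suc n) < m"
    proof
      assume "a (Suc n) < m"
      hence "Suc n \<in> {i. a i < m}" by simp
      hence "Suc n \<le> n" unfolding n_def by (rule Max_ge[OF fin])
      thus False by simp
    qed
    moreover have "a (Suc n) \<noteq> m" using m by auto
    ultimately have big: "m < a (Suc n)" by simp
    have "\<not> (a n < m \<and> three_free (insert m (a ` {..n})))"
      using not_less_Least[of m "\<lambda>m. a n < m \<and> three_free (insert m (a ` {..n}))"]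
        big k(2)[rule_format, OF kn] by auto
    hence ntf: "\<not> three_free (insert m (a ` {..n}))" using nin by simp
    have tf: "three_free (a ` {..n})" by (rule stanley_tf_prefix[OF assms])
    have small: "\<forall>v\<in>a ` {..n}. v < m"
    proof
      fix v assume "v \<in> a ` {..n}"
      then obtain i where "i \<le> n" "v = a i" by auto
      hence "v \<le> a n" using strict_mono_less_eq[OF k(1)] by simp
      thus "v < m" using nin by simp
    qed
    from not_tf[OF ntf] obtain x y z where xyz: "x \<in> insert m (a ` {..n})" "y \<in> insert m (a ` {..n})"
      "z \<in> insert m (a ` {..n})" "x < y" "y < z" "x + z = 2 * y"
      by blast
    have "z = m"
    proof (rule ccontr)
      assume "z \<noteq> m"
      hence "z \<in> a ` {..n}" using xyz by auto
      hence "z < m" using small by auto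
      hence "x \<in> a ` {..n}" "y \<in> a ` {..n}" using xyz by auto
      thus False using tfD[OF tf _ _ \<open>z \<in> a ` {..n}\<close>] xyz by blast
    qed
    hence "x \<in> a ` {..n}" "y \<in> a ` {..n}" using xyz by auto
    hence "x \<in> range a" "y \<in> range a" by auto
    moreover have "x < y" "y < m" "x + m = 2 * y" using xyz \<open>z = m\<close> by auto
    ultimately show "\<exists>x y. x \<in> range a \<and> y \<in> range a \<and> x < y \<and> y < m \<and> x + m = 2 * y"
      by blast
  qed
qed


lemma stanley_intro:
  fixes b :: "nat \<Rightarrow> nat"
  assumes sm: "strict_mono b" and b0: "b 0 = 0" and tf: "three_free (range b)"
    and cov: "\<forall>m. b n0 < m \<and> m \<notin> range b \<longrightarrow>
           (\<exists>x y. x \<in> range b \<and> y \<in> range b \<and> x < y \<and> y < m \<and> x + m = 2 * y)"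
  shows "stanley b"
  unfolding stanley_def
proof (intro conjI exI[of _ n0] allI impI)
  show "b 0 = 0" "strict_mono b" by fact+
  show "three_free (b ` {..n0})" by (rule tf_subset[OF tf]) auto
  fix n assume nn: "n0 \<le> n"
  show "b (Suc n) = (LEAST m. b n < m \<and> three_free (insert m (b ` {..n})))"
  proof (rule Least_equality[symmetric])
    have "three_free (insert (b (Suc n)) (b ` {..n}))" by (rule tf_subset[OF tf]) auto
    thus "b n < b (Suc n) \<and> three_free (insert (b (Suc n)) (b ` {..n}))"
      using sm by (auto simp: strict_mono_def)
  next
    fix m assume m: "b n < m \<and> three_free (insert m (b ` {..n}))"
    show "b (Suc n) \<le> m"
    proof (rule ccontr)
      assume "\<not> b (Suc n) \<le> m"
      hence lt: "m < b (Suc n)" by simp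
      have notin: "m \<notin> range b"
      proof
        assume "m \<in> range b"
        then obtain i where "m = b i" by auto
        with m lt have "n < i" "i < Suc n" using sm strict_mono_less by blast+
        thus False by simp
      qed
      have "b n0 \<le> b n" using sm nn strict_mono_less_eq by blast
      hence "b n0 < m" using m by simp
      then obtain x y where xy: "x \<in> range b" "y \<in> range b" "x < y" "y < m" "x + m = 2 * y"
        using cov notin by blast
      have inn: "v \<in> range b \<Longrightarrow> v < m \<Longrightarrow> v \<in> b ` {..n}" for v
      proof -
        assume "v \<in> range b" "v < m"
        then obtain i where i: "v = b i" by auto
        have "b i < b (Suc n)" using i \<open>v < m\<close> lt by simp
        hence "i < Suc n" using sm strict_mono_less by blast
        thus ?thesis using i by auto
      qed
      have "x \<in> b ` {..n}" "y \<in> b ` {..n}" using inn xy by auto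
      thus False using tfD[of "insert m (b ` {..n})" x y m] m xy by blast
    qed
  qed
qed



locale indep_st =
  fixes a :: "nat \<Rightarrow> nat" and L :: nat and k0 :: nat and K :: nat
  assumes sm: "strict_mono a" and a0: "a 0 = 0" and tf: "three_free (range a)"
    and cov: "\<forall>m. a k0 < m \<and> m \<notin> range a \<longrightarrow>
           (\<exists>x y. x \<in> range a \<and> y \<in> range a \<and> x < y \<and> y < m \<and> x + m = 2 * y)"
    and ind: "\<forall>j\<ge>K. (\<forall>i<2^j. a (2^j + i) = a (2^j) + a i) \<and> a (2^j) + L = 2 * a (2^j - 1) + 1"
begin

definition C where "C j = a (2^j)"
definition N where "N j = a (2^j - 1)"
definition inA where "inA j v \<longleftrightarrow> (\<exists>i<2^j. v = a i)"
definition good where "good j \<longleftrightarrow> K \<le> j \<and> a k0 < C j \<and> L \<le> N j"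

lemma CN: "K \<le> j \<Longrightarrow> C j + L = 2 * N j + 1"
  using ind unfolding C_def N_def by blast

lemma shift: "K \<le> j \<Longrightarrow> i < 2^j \<Longrightarrow> a (2^j + i) = C j + a i"
  using ind unfolding C_def by blast

lemma NS: "K \<le> j \<Longrightarrow> N (Suc j) = C j + N j"
proof -
  assume j: "K \<le> j"
  have e: "(2::nat)^Suc j - 1 = 2^j + (2^j - 1)" by simp
  have "N (Suc j) = a (2^j + (2^j - 1))" by (simp only: N_def e)
  also have "\<dots> = C j + a (2^j - 1)" by (rule shift[OF j]) simp
  finally show ?thesis by (simp add: N_def)
qed

lemma CS: "K \<le> j \<Longrightarrow> C (Suc j) = 3 * C j"
proof -
  assume j: "K \<le> j"
  have "C (Suc j) + L = 2 * N (Suc j) + 1" using CN j by simp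
  also have "\<dots> = 2 * C j + (2 * N j + 1)" using NS[OF j] by simp
  also have "\<dots> = 2 * C j + C j + L" using CN[OF j] by simp
  finally show ?thesis by simp
qed

lemma A_bound: "inA j v \<Longrightarrow> v \<le> N j"
  unfolding inA_def N_def using strict_mono_less_eq[OF sm] by fastforce

lemma N_lt_C: "N j < C j"
  unfolding N_def C_def using sm by (simp add: strict_mono_def)

lemma A_lt: "inA j v \<Longrightarrow> v < C j"
  using A_bound N_lt_C le_less_trans by blast

lemma A_range: "inA j v \<Longrightarrow> v \<in> range a"
  unfolding inA_def by blast

lemma A_of_range: "v \<in> range a \<Longrightarrow> v < C j \<Longrightarrow> inA j v"
  unfolding inA_def C_def using strict_mono_less[OF sm] by blast

lemma A_mono: "j \<le> j' \<Longrightarrow> inA j v \<Longrightarrow> inA j' v"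
proof -
  assume jj: "j \<le> j'" and v: "inA j v"
  have "(2::nat)^j \<le> 2^j'" using jj by (simp add: power_increasing)
  thus ?thesis using v unfolding inA_def using less_le_trans by blast
qed

lemma A0: "inA j 0"
  unfolding inA_def using a0 by force

lemma A_split: "K \<le> j \<Longrightarrow> inA (Suc j) v \<longleftrightarrow> inA j v \<or> (\<exists>w. inA j w \<and> v = C j + w)"
proof
  assume j: "K \<le> j" and v: "inA (Suc j) v"
  then obtain i where i: "i < 2^Suc j" "v = a i" unfolding inA_def by blast
  show "inA j v \<or> (\<exists>w. inA j w \<and> v = C j + w)"
  proof (cases "i < 2^j")
    case True thus ?thesis using i unfolding inA_def by blast
  next
    case False
    define i' where "i' = i - 2^j"
    have "i' < 2^j" "i = 2^j + i'" using False i(1) unfolding i'_def by auto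
    thus ?thesis using shift[OF j] i unfolding inA_def by auto
  qed
next
  assume j: "K \<le> j" and v: "inA j v \<or> (\<exists>w. inA j w \<and> v = C j + w)"
  show "inA (Suc j) v"
  proof (cases "inA j v")
    case True thus ?thesis using A_mono[of j "Suc j"] by simp
  next
    case False
    then obtain w where w: "inA j w" "v = C j + w" using v by blast
    then obtain i where i: "i < 2^j" "w = a i" unfolding inA_def by blast
    have "v = a (2^j + i)" using shift[OF j i(1)] w i by simp
    moreover have "2^j + i < 2^Suc j" using i by simp
    ultimately show ?thesis unfolding inA_def by blast
  qed
qed

lemma good_mono: "good j \<Longrightarrow> j \<le> j' \<Longrightarrow> good j'"
proof -
  assume g: "good j" and jj: "j \<le> j'"
  have "2^j \<le> (2::nat)^j'" using jj by (simp add: power_increasing)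
  moreover have "2^j - 1 \<le> (2::nat)^j' - 1" using \<open>2^j \<le> (2::nat)^j'\<close> by (rule diff_le_mono)
  ultimately have "C j \<le> C j'" "N j \<le> N j'" unfolding C_def N_def using strict_mono_less_eq[OF sm] by auto
  thus ?thesis using g jj unfolding good_def by auto
qed

lemma good_NC: "good j \<Longrightarrow> C j = 2 * N j + 1 - L \<and> N j < C j \<and> L < C j"
  using CN[of j] N_lt_C[of j] unfolding good_def by auto

lemma covA: "a k0 < m \<Longrightarrow> m \<notin> range a \<Longrightarrow>
   (\<exists>x y. x \<in> range a \<and> y \<in> range a \<and> x < y \<and> y < m \<and> x + m = 2 * y)"
  using cov by blast

lemma G3w:
  assumes g: "good j" and z: "z < C j"
  shows "(\<exists>x y. inA j x \<and> inA j y \<and> z + x = 2 * y) \<or> (\<exists>x y. inA j x \<and> inA j y \<and> z + C j + x = 2 * y)"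
proof -
  have Kj: "K \<le> j" using g unfolding good_def by simp
  note gg = good_NC[OF g]
  define m where "m = 2 * C j + z"
  have C3: "C (Suc j) = 3 * C j" by (rule CS[OF Kj])
  have m1: "a k0 < m" using g unfolding good_def m_def by simp
  have m2: "m \<notin> range a"
  proof
    assume "m \<in> range a"
    moreover have "m < C (Suc j)" using C3 z m_def by simp
    ultimately have "inA (Suc j) m" by (rule A_of_range)
    hence "inA j m \<or> (\<exists>w. inA j w \<and> m = C j + w)" using A_split[OF Kj] by simp
    thus False
    proof
      assume "inA j m" thus False using A_lt[of j m] m_def by simp
    next
      assume "\<exists>w. inA j w \<and> m = C j + w"
      then obtain w where "inA j w" "m = C j + w" by blast
      thus False using A_lt[of j w] m_def by simp
    qed
  qed
  obtain x y where xy: "x \<in> range a" "y \<in> range a" "x < y" "y < m" "x + m = 2 * y"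
    using covA[OF m1 m2] by blast
  have yS: "inA (Suc j) y" using A_of_range[OF xy(2)] xy(4) C3 z m_def by simp
  have xS: "inA (Suc j) x" using A_of_range[OF xy(1)] xy(3,4) C3 z m_def by simp
  show ?thesis
  proof (cases "inA j y")
    case True
    hence "y \<le> N j" by (rule A_bound)
    thus ?thesis using xy(5) gg m_def by simp
  next
    case False
    then obtain w where w: "inA j w" "y = C j + w" using yS A_split[OF Kj] by blast
    have e: "x + z = 2 * w" using xy(5) w(2) m_def by simp
    show ?thesis
    proof (cases "inA j x")
      case True thus ?thesis using w e by (metis add.commute)
    next
      case False
      then obtain u where u: "inA j u" "x = C j + u" using xS A_split[OF Kj] by blast
      thus ?thesis using w e by (metis add.commute add.left_commute)
    qed
  qed
qed

lemma G2:
  assumes g: "good j" and r: "r < C j" and nr: "\<not> inA j r"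
  shows "(\<exists>x y. inA j x \<and> inA j y \<and> x < y \<and> y < r \<and> x + r = 2 * y) \<or>
         (\<exists>x y. inA j x \<and> inA j y \<and> r + C j + x = 2 * y)"
proof -
  have Kj: "K \<le> j" using g unfolding good_def by simp
  have Kj1: "K \<le> Suc j" using Kj by simp
  note gg = good_NC[OF g]
  define m where "m = 3 * C j + r"
  have C3: "C (Suc j) = 3 * C j" by (rule CS[OF Kj])
  have C9: "C (Suc (Suc j)) = 9 * C j" using CS[OF Kj1] C3 by simp
  have m1: "a k0 < m" using g unfolding good_def m_def by simp
  have split2: "inA (Suc (Suc j)) v \<Longrightarrow> inA (Suc j) v \<or> (\<exists>w. inA (Suc j) w \<and> v = 3 * C j + w)" for v
    using A_split[OF Kj1] C3 by auto
  have lowj: "inA (Suc j) v \<Longrightarrow> v < C j \<Longrightarrow> inA j v" for v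
    using A_split[OF Kj] by auto
  have m2: "m \<notin> range a"
  proof
    assume "m \<in> range a"
    moreover have "m < C (Suc (Suc j))" using C9 r m_def by simp
    ultimately have "inA (Suc (Suc j)) m" by (rule A_of_range)
    hence "inA (Suc j) m \<or> (\<exists>w. inA (Suc j) w \<and> m = 3 * C j + w)" by (rule split2)
    thus False
    proof
      assume "inA (Suc j) m" thus False using A_lt[of "Suc j" m] C3 m_def by simp
    next
      assume "\<exists>w. inA (Suc j) w \<and> m = 3 * C j + w"
      then obtain w where "inA (Suc j) w" "m = 3 * C j + w" by blast
      hence "inA (Suc j) r" using m_def by simp
      hence "inA j r" using lowj r by simp
      thus False using nr by simp
    qed
  qed
  obtain x y where xy: "x \<in> range a" "y \<in> range a" "x < y" "y < m" "x + m = 2 * y"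
    using covA[OF m1 m2] by blast
  have yS: "inA (Suc (Suc j)) y" using A_of_range[OF xy(2)] xy(4) C9 r m_def by simp
  have xS: "inA (Suc (Suc j)) x" using A_of_range[OF xy(1)] xy(3,4) C9 r m_def by simp
  show ?thesis
  proof (cases "inA (Suc j) y")
    case True
    show ?thesis
    proof (cases "inA j y")
      case True
      hence "y \<le> N j" by (rule A_bound)
      thus ?thesis using xy(5) gg m_def by simp
    next
      case False
      then obtain w where w: "inA j w" "y = C j + w" using \<open>inA (Suc j) y\<close> A_split[OF Kj] by blast
      have e: "x + C j + r = 2 * w" using xy(5) w(2) m_def by simp
      have "x < C (Suc j)" using xy(3) w A_lt[of j w] C3 by simp
      hence xS1: "inA (Suc j) x" using A_of_range[OF xy(1)] by simp
      show ?thesis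
      proof (cases "inA j x")
        case True thus ?thesis using w e by (metis add.commute add.assoc)
      next
        case False
        then obtain u where u: "inA j u" "x = C j + u" using xS1 A_split[OF Kj] by blast
        have "w \<le> N j" using w(1) by (rule A_bound)
        thus ?thesis using e u gg by simp
      qed
    qed
  next
    case False
    then obtain w where w: "inA (Suc j) w" "y = 3 * C j + w" using yS split2 by blast
    have wr: "w < r" using xy(4) w(2) m_def by simp
    hence wj: "inA j w" using lowj w(1) r by simp
    have e: "x + r = 3 * C j + 2 * w" using xy(5) w(2) m_def by simp
    show ?thesis
    proof (cases "inA (Suc j) x")
      case True
      have "x \<le> N (Suc j)" using True by (rule A_bound)
      moreover have "N (Suc j) = C j + N j" by (rule NS[OF Kj])
      ultimately show ?thesis using e gg r by simp
    next
      case False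
      then obtain u where u: "inA (Suc j) u" "x = 3 * C j + u" using xS split2 by blast
      have uw: "u < w" using xy(3) u(2) w(2) by simp
      hence uj: "inA j u" using lowj u(1) wr r by simp
      have "u + r = 2 * w" using e u(2) by simp
      thus ?thesis using uj wj uw wr by blast
    qed
  qed
qed

lemma G3:
  assumes g: "good j" and z: "z < C (Suc j)"
  shows "\<exists>x y. inA (Suc j) x \<and> inA (Suc j) y \<and> z + x = 2 * y"
proof -
  have Kj: "K \<le> j" using g unfolding good_def by simp
  have C3: "C (Suc j) = 3 * C j" by (rule CS[OF Kj])
  have up: "inA j v \<Longrightarrow> inA (Suc j) v" for v using A_split[OF Kj] by simp
  have upC: "inA j v \<Longrightarrow> inA (Suc j) (C j + v)" for v using A_split[OF Kj] by blast
  consider "z < C j" | "C j \<le> z \<and> z < 2 * C j" | "2 * C j \<le> z" by linarith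
  thus ?thesis
  proof cases
    case 1
    from G3w[OF g 1] show ?thesis
    proof
      assume "\<exists>x y. inA j x \<and> inA j y \<and> z + x = 2 * y"
      thus ?thesis using up by blast
    next
      assume "\<exists>x y. inA j x \<and> inA j y \<and> z + C j + x = 2 * y"
      then obtain x y where "inA j x" "inA j y" "z + C j + x = 2 * y" by blast
      thus ?thesis using up upC by (metis add.assoc)
    qed
  next
    case 2
    define r where "r = z - C j"
    have r: "r < C j" "z = C j + r" using 2 r_def by auto
    from G3w[OF g r(1)] show ?thesis
    proof
      assume "\<exists>x y. inA j x \<and> inA j y \<and> r + x = 2 * y"
      then obtain x y where xy: "inA j x" "inA j y" "r + x = 2 * y" by blast
      have "z + (C j + x) = 2 * (C j + y)" using xy(3) r(2) by simp
      thus ?thesis using upC xy by blast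
    next
      assume "\<exists>x y. inA j x \<and> inA j y \<and> r + C j + x = 2 * y"
      then obtain x y where xy: "inA j x" "inA j y" "r + C j + x = 2 * y" by blast
      have "z + x = 2 * y" using xy(3) r(2) by simp
      thus ?thesis using up xy by blast
    qed
  next
    case 3
    define r where "r = z - 2 * C j"
    have r: "r < C j" "z = 2 * C j + r" using 3 z C3 r_def by auto
    from G3w[OF g r(1)] show ?thesis
    proof
      assume "\<exists>x y. inA j x \<and> inA j y \<and> r + x = 2 * y"
      then obtain x y where xy: "inA j x" "inA j y" "r + x = 2 * y" by blast
      have "z + x = 2 * (C j + y)" using xy(3) r(2) by simp
      thus ?thesis using up upC xy by blast
    next
      assume "\<exists>x y. inA j x \<and> inA j y \<and> r + C j + x = 2 * y"
      then obtain x y where xy: "inA j x" "inA j y" "r + C j + x = 2 * y" by blast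
      have "z + (C j + x) = 2 * (C j + y)" using xy(3) r(2) by simp
      thus ?thesis using upC xy by blast
    qed
  qed
qed

lemma Gneg:
  assumes g: "good j" and big: "L + Dd \<le> C j" and d: "1 \<le> d" "d \<le> Dd"
  shows "\<exists>x y. inA (Suc j) x \<and> inA (Suc j) y \<and> 2 * y + d = x"
proof -
  have Kj: "K \<le> j" using g unfolding good_def by simp
  note gg = good_NC[OF g]
  have up: "inA j v \<Longrightarrow> inA (Suc j) v" for v using A_split[OF Kj] by simp
  have upC: "inA j v \<Longrightarrow> inA (Suc j) (C j + v)" for v using A_split[OF Kj] by blast
  have z: "C j - d < C j" using d big by simp
  from G3w[OF g z] show ?thesis
  proof
    assume "\<exists>x y. inA j x \<and> inA j y \<and> C j - d + x = 2 * y"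
    then obtain x y where xy: "inA j x" "inA j y" "C j - d + x = 2 * y" by blast
    have "2 * y + d = C j + x" using xy(3) d big by simp
    thus ?thesis using up upC xy by blast
  next
    assume "\<exists>x y. inA j x \<and> inA j y \<and> C j - d + C j + x = 2 * y"
    then obtain x y where xy: "inA j x" "inA j y" "C j - d + C j + x = 2 * y" by blast
    have "y \<le> N j" using xy(2) by (rule A_bound)
    thus ?thesis using xy(3) gg big d CN[OF Kj] by simp
  qed
qed

end


definition bseq :: "(nat \<Rightarrow> nat) \<Rightarrow> nat \<Rightarrow> nat \<Rightarrow> nat \<Rightarrow> nat" where
  "bseq a D k n = a n + D * (if n < 2^k then 0 else 2^(floor_log n - k))"

lemma fl_blk: "i < 2^j \<Longrightarrow> floor_log (2^j + i) = j"
  by (rule floor_log_eqI) auto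

lemma decomp: "(2::nat)^k \<le> n \<Longrightarrow> \<exists>p i. i < 2^(k+p) \<and> n = 2^(k+p) + i"
proof -
  assume kn: "(2::nat)^k \<le> n"
  hence n0: "n > 0" using not_less by fastforce
  define q where "q = floor_log n"
  have q1: "2^q \<le> n" unfolding q_def using floor_log_exp2_le[OF n0] by simp
  have q2: "n < 2 * 2^q" unfolding q_def by (rule floor_log_exp2_gt)
  have "k \<le> q" unfolding q_def using floor_log_le_iff[OF kn] by simp
  then obtain p where p: "q = k + p" using le_Suc_ex by blast
  show ?thesis using q1 q2 p by (intro exI[of _ p] exI[of _ "n - 2^q"]) auto
qed

locale bcon = indep_st +
  fixes k D :: nat
  assumes gk: "good (k - 1)" and k1: "1 \<le> k" and LD: "L \<le> D" and D1: "1 \<le> D"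
    and DC: "L + D \<le> C (k - 1)"
begin

definition b where "b = bseq a D k"
definition E where "E p = C (k + p) + D * 2^p"
definition inB where "inB j v \<longleftrightarrow> (\<exists>i<2^j. v = b i)"
fun MB where "MB 0 = N k" | "MB (Suc q) = E q + N (k + q)"

lemma kk: "Suc (k - 1) = k" using k1 by simp

lemma good_kp: "good (k + p)"
  using good_mono[OF gk] by simp

lemma good_km: "good (k + p - 1)"
  using good_mono[OF gk] by simp

lemma K_kp: "K \<le> k + p"
  using good_kp unfolding good_def by simp

lemma NC_kp: "C (k+p) + L = 2 * N (k+p) + 1" "N (k+p) < C (k+p)" "L \<le> N (k+p)"
  using CN[OF K_kp] N_lt_C good_kp unfolding good_def by auto

lemma C_Suc: "C (k + Suc p) = 3 * C (k + p)"
  using CS[OF K_kp] by simp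

lemma C_k: "C k = 3 * C (k - 1)"
  using CS[of "k - 1"] gk kk unfolding good_def by simp

lemma DC2: "D * 2^p \<le> C (k + p)"
proof (induction p)
  case 0 thus ?case using C_k DC by simp
next
  case (Suc p) thus ?case using C_Suc[of p] by simp
qed

lemma C_mono_k: "C k \<le> C (k + p)"
proof (induction p)
  case (Suc p) thus ?case using C_Suc[of p] by simp
qed simp

lemma b_low: "n < 2^k \<Longrightarrow> b n = a n"
  unfolding b_def bseq_def by simp

lemma b_blk: "i < 2^(k+p) \<Longrightarrow> b (2^(k+p) + i) = E p + a i"
proof -
  assume i: "i < 2^(k+p)"
  have "(2::nat)^k \<le> 2^(k+p)" by (simp add: power_increasing)
  hence "\<not> 2^(k+p) + i < (2::nat)^k" by linarith
  moreover have "floor_log (2^(k+p) + i) = k + p" by (rule fl_blk[OF i])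
  moreover have "a (2^(k+p) + i) = C (k+p) + a i" by (rule shift[OF K_kp i])
  ultimately show ?thesis unfolding b_def bseq_def E_def by simp
qed

lemma b_blk0: "b (2^(k+p)) = E p"
  using b_blk[of 0 p] a0 by simp

lemma inB_k: "inB k v \<longleftrightarrow> inA k v"
  unfolding inB_def inA_def using b_low by auto

lemma inB_split: "inB (k + Suc p) v \<longleftrightarrow> inB (k+p) v \<or> (\<exists>w. inA (k+p) w \<and> v = E p + w)"
proof
  assume "inB (k + Suc p) v"
  then obtain i where i: "i < 2^(k + Suc p)" "v = b i" unfolding inB_def by blast
  show "inB (k+p) v \<or> (\<exists>w. inA (k+p) w \<and> v = E p + w)"
  proof (cases "i < 2^(k+p)")
    case True thus ?thesis using i unfolding inB_def by blast
  next
    case False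
    define i' where "i' = i - 2^(k+p)"
    have i': "i' < 2^(k+p)" "i = 2^(k+p) + i'" using False i(1) unfolding i'_def by auto
    thus ?thesis using b_blk[OF i'(1)] i unfolding inA_def by auto
  qed
next
  assume v: "inB (k+p) v \<or> (\<exists>w. inA (k+p) w \<and> v = E p + w)"
  show "inB (k + Suc p) v"
  proof (cases "inB (k+p) v")
    case True
    then obtain i where "i < 2^(k+p)" "v = b i" unfolding inB_def by blast
    moreover have "(2::nat)^(k+p) < 2^(k + Suc p)" by simp
    ultimately show ?thesis unfolding inB_def using less_trans by blast
  next
    case False
    then obtain w where w: "inA (k+p) w" "v = E p + w" using v by blast
    then obtain i where i: "i < 2^(k+p)" "w = a i" unfolding inA_def by blast
    have "v = b (2^(k+p) + i)" using b_blk[OF i(1)] w i by simp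
    moreover have "2^(k+p) + i < (2::nat)^(k + Suc p)" using i by simp
    ultimately show ?thesis unfolding inB_def by blast
  qed
qed

lemma XinB: "inA (k+p) w \<Longrightarrow> inB (k + Suc p) (E p + w)"
  using inB_split by blast

lemma inB_mono: "j \<le> j' \<Longrightarrow> inB j v \<Longrightarrow> inB j' v"
proof -
  assume jj: "j \<le> j'" and v: "inB j v"
  have "(2::nat)^j \<le> 2^j'" using jj by (simp add: power_increasing)
  thus ?thesis using v unfolding inB_def using less_le_trans by blast
qed

lemma inB_range: "inB j v \<Longrightarrow> v \<in> range b"
  unfolding inB_def by blast

lemma range_inB: "v \<in> range b \<Longrightarrow> \<exists>p. inB (k+p) v"
proof -
  assume "v \<in> range b"
  then obtain n where n: "v = b n" by blast
  have "n < 2^n" by (rule less_exp)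
  also have "(2::nat)^n \<le> 2^(k+n)" by (simp add: power_increasing)
  finally show ?thesis using n unfolding inB_def by blast
qed

lemma MB_lt_E: "MB p < E p"
proof (cases p)
  case 0 thus ?thesis using NC_kp[of 0] unfolding E_def by simp
next
  case (Suc q)
  thus ?thesis using NC_kp[of q] C_Suc[of q] by (simp add: E_def)
qed

lemma B_bound: "inB (k+p) v \<Longrightarrow> v \<le> MB p"
proof (induction p arbitrary: v)
  case 0 thus ?case using inB_k A_bound by simp
next
  case (Suc p)
  from Suc.prems have "inB (k+p) v \<or> (\<exists>w. inA (k+p) w \<and> v = E p + w)"
    using inB_split by simp
  thus ?case
  proof
    assume "inB (k+p) v"
    hence "v \<le> MB p" by (rule Suc.IH)
    thus ?thesis using MB_lt_E[of p] by simp
  next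
    assume "\<exists>w. inA (k+p) w \<and> v = E p + w"
    thus ?thesis using A_bound by auto
  qed
qed

lemma E_ge: "E 0 \<le> E p"
proof -
  have h1: "D \<le> D * 2^p" by simp
  have h2: "C k \<le> C (k + p)" by (rule C_mono_k)
  have e0: "E 0 = C k + D" by (simp add: E_def)
  have ep: "E p = C (k + p) + D * 2^p" by (simp add: E_def)
  show ?thesis unfolding e0 ep using h1 h2 by linarith
qed

lemma B_small: "inB (k+p) v \<Longrightarrow> v < E 0 \<Longrightarrow> inA k v"
proof (induction p arbitrary: v)
  case 0 thus ?case using inB_k by simp
next
  case (Suc p)
  from Suc.prems(1) have "inB (k+p) v \<or> (\<exists>w. inA (k+p) w \<and> v = E p + w)"
    using inB_split by simp
  thus ?case
  proof
    assume "inB (k+p) v" thus ?thesis using Suc.IH Suc.prems(2) by simp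
  next
    assume "\<exists>w. inA (k+p) w \<and> v = E p + w"
    thus ?thesis using E_ge[of p] Suc.prems(2) by auto
  qed
qed

lemma b0: "b 0 = 0"
  using b_low[of 0] a0 by simp

lemma b_sm: "strict_mono b"
proof (rule strict_mono_Suc_iff[THEN iffD2], intro allI)
  fix n
  show "b n < b (Suc n)"
  proof (cases "Suc n < 2^k")
    case True thus ?thesis using b_low sm by (simp add: strict_mono_def)
  next
    case False
    show ?thesis
    proof (cases "Suc n = 2^k")
      case True
      have "n = 2^k - 1" using True by simp
      hence "b n = N k" using b_low[of n] True unfolding N_def by simp
      moreover have "b (Suc n) = E 0" using b_blk0[of 0] True by simp
      ultimately show ?thesis using MB_lt_E[of 0] by simp
    next
      case False
      hence "2^k \<le> n" using \<open>\<not> Suc n < 2^k\<close> by simp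
      then obtain p i where pi: "i < 2^(k+p)" "n = 2^(k+p) + i" using decomp by blast
      show ?thesis
      proof (cases "Suc i < 2^(k+p)")
        case True
        have "b (Suc n) = E p + a (Suc i)" using b_blk[OF True] pi by simp
        moreover have "b n = E p + a i" using b_blk[OF pi(1)] pi by simp
        ultimately show ?thesis using sm by (simp add: strict_mono_def)
      next
        case False
        hence si: "Suc i = 2^(k+p)" using pi by simp
        hence "Suc n = 2^(k + Suc p)" using pi by simp
        hence "b (Suc n) = E (Suc p)" using b_blk0[of "Suc p"] by simp
        moreover have "b n = E p + N (k+p)"
        proof -
          have "i = 2^(k+p) - 1" using si by simp
          thus ?thesis using b_blk[OF pi(1)] pi(2) unfolding N_def by simp
        qed
        ultimately show ?thesis using MB_lt_E[of "Suc p"] by simp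
      qed
    qed
  qed
qed

end


context bcon
begin


lemma NS_kp: "N (k + Suc q) = C (k+q) + N (k+q)"
  using NS[OF K_kp[of q]] by simp

lemma MBN: "MB p + N (k+p) < E p"
proof (cases p)
  case 0 thus ?thesis using NC_kp[of 0] LD by (simp add: E_def)
next
  case (Suc q)
  have "L \<le> D * 2^q" using LD by (metis le_trans mult.right_neutral mult_le_mono2 one_le_numeral one_le_power)
  thus ?thesis using Suc NC_kp[of q] C_Suc[of q] NS_kp[of q] by (simp add: E_def)
qed

lemma twoMB: "2 * MB p + 1 \<le> E p + L"
proof (cases p)
  case 0 thus ?thesis using NC_kp[of 0] by (simp add: E_def)
next
  case (Suc q)
  thus ?thesis using NC_kp[of q] C_Suc[of q] by (simp add: E_def)
qed

lemma twoMB0: "2 * MB 0 < E 0"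
  using NC_kp[of 0] LD by (simp add: E_def)

lemma twoMB_lt: "2 * MB q < E (Suc q)"
proof -
  have "2 * MB q + 1 \<le> E q + L" by (rule twoMB)
  moreover have "E q + L < E (Suc q)" using NC_kp[of q] C_Suc[of q] by (simp add: E_def)
  ultimately show ?thesis by simp
qed


end


context bcon
begin

lemma TF: "three_free {v. inB (k+p) v}"
proof (induction p)
  case 0
  show ?case by (rule tf_subset[OF tf]) (auto simp: inB_k dest: A_range)
next
  case (Suc p)
  show ?case unfolding three_free_def
  proof (intro ballI impI notI)
    fix x y z
    assume xm: "x \<in> {v. inB (k + Suc p) v}" and ym: "y \<in> {v. inB (k + Suc p) v}"
      and zm: "z \<in> {v. inB (k + Suc p) v}" and ord: "x < y \<and> y < z" and e: "x + z = 2 * y"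
    have xs: "inB (k+p) x \<or> (\<exists>w. inA (k+p) w \<and> x = E p + w)" using xm inB_split by simp
    have ys: "inB (k+p) y \<or> (\<exists>w. inA (k+p) w \<and> y = E p + w)" using ym inB_split by simp
    have zs: "inB (k+p) z \<or> (\<exists>w. inA (k+p) w \<and> z = E p + w)" using zm inB_split by simp
    have lowX: "v < u \<Longrightarrow> inB (k+p) u \<Longrightarrow> (inB (k+p) v \<or> (\<exists>w. inA (k+p) w \<and> v = E p + w)) \<Longrightarrow> inB (k+p) v" for u v
      using B_bound[of p u] MB_lt_E[of p] by auto
    show False
    proof (cases "inB (k+p) z")
      case True
      have yB: "inB (k+p) y" using lowX[OF _ True ys] ord by simp
      have xB: "inB (k+p) x" using lowX[OF _ True xs] ord by simp
      show False using tfD[OF Suc.IH, of x y z] xB yB True ord e by simp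
    next
      case False
      then obtain z' where z': "inA (k+p) z'" "z = E p + z'" using zs by blast
      show False
      proof (cases "inB (k+p) y")
        case False
        then obtain y' where y': "inA (k+p) y'" "y = E p + y'" using ys by blast
        show False
        proof (cases "inB (k+p) x")
          case False
          then obtain x' where x': "inA (k+p) x'" "x = E p + x'" using xs by blast
          have h: "x' < y'" "y' < z'" "x' + z' = 2 * y'" using e ord x' y' z' by auto
          show False by (rule tfD[OF tf A_range[OF x'(1)] A_range[OF y'(1)] A_range[OF z'(1)] h])
        next
          case True
          have "x \<le> MB p" using True by (rule B_bound)
          moreover have "z' \<le> N (k+p)" using z'(1) by (rule A_bound)
          moreover have "x + z' = E p + 2 * y'" using e y' z' by simp
          ultimately show False using MBN[of p] by simp
        qed
      next
        case True
        have xB: "inB (k+p) x" using lowX[OF _ True xs] ord by simp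
        have y2: "2 * y \<le> 2 * MB p" using B_bound[OF True] by simp
        show False
        proof (cases p)
          case 0
          thus False using y2 twoMB0 e z' by simp
        next
          case (Suc q)
          have yq: "inB (k + Suc q) y" using True Suc by simp
          have "inB (k+q) y \<or> (\<exists>w. inA (k+q) w \<and> y = E q + w)" using yq inB_split by simp
          moreover have "\<not> inB (k+q) y"
          proof
            assume "inB (k+q) y"
            hence "2 * y \<le> 2 * MB q" using B_bound by simp
            thus False using twoMB_lt[of q] e z' Suc by simp
          qed
          ultimately obtain y' where y': "inA (k+q) y'" "y = E q + y'" by blast
          have C3: "C (k + Suc q) = 3 * C (k+q)" by (rule C_Suc)
          have ee: "x + C (k+q) + z' = 2 * y'" using e y'(2) z'(2) Suc C3 by (simp add: E_def)
          have xL: "x + z' + 1 \<le> L" using twoMB[of p] y2 e z'(2) by simp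
          have "x < E 0" using xL LD by (simp add: E_def)
          hence xA: "inA k x" using B_small[OF xB] by simp
          have Kq: "K \<le> k + q" by (rule K_kp)
          have Kq1: "K \<le> k + Suc q" by (rule K_kp)
          have m2: "inA (Suc (k+q)) (C (k+q) + y')" using A_split[OF Kq] y'(1) by blast
          have m3: "inA (Suc (k + Suc q)) (C (k + Suc q) + z')" using A_split[OF Kq1] z'(1) Suc by blast
          have "L \<le> N (k+q)" "N (k+q) < C (k+q)" using NC_kp[of q] by auto
          moreover have "y' \<le> N (k+q)" using y'(1) by (rule A_bound)
          ultimately have o1: "x < C (k+q) + y'" "C (k+q) + y' < C (k + Suc q) + z'"
            using xL C3 by auto
          have e3: "x + (C (k + Suc q) + z') = 2 * (C (k+q) + y')" using ee C3 by simp
          show False using tfD[OF tf A_range[OF xA] A_range[OF m2] A_range[OF m3] o1 e3] .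
        qed
      qed
    qed
  qed
qed


end


context bcon
begin

lemma tf_b: "three_free (range b)"
  unfolding three_free_def
proof (intro ballI impI notI)
  fix x y z assume m: "x \<in> range b" "y \<in> range b" "z \<in> range b" and o: "x < y \<and> y < z" and e: "x + z = 2 * y"
  obtain p1 where p1: "inB (k+p1) x" using range_inB m(1) by blast
  obtain p2 where p2: "inB (k+p2) y" using range_inB m(2) by blast
  obtain p3 where p3: "inB (k+p3) z" using range_inB m(3) by blast
  note p = p1 p2 p3
  let ?p = "max p1 (max p2 p3)"
  have "inB (k + ?p) x" by (rule inB_mono[OF _ p1]) simp
  moreover have "inB (k + ?p) y" by (rule inB_mono[OF _ p2]) simp
  moreover have "inB (k + ?p) z" by (rule inB_mono[OF _ p3]) simp
  ultimately show False using tfD[OF TF[of ?p], of x y z] o e by simp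
qed

lemma G3k: "z < C (k+p) \<Longrightarrow> \<exists>x y. inA (k+p) x \<and> inA (k+p) y \<and> z + x = 2 * y"
proof -
  assume z: "z < C (k+p)"
  have e: "Suc (k + p - 1) = k + p" using k1 by simp
  show ?thesis using G3[OF good_km[of p], unfolded e, OF z] .
qed


end


context bcon
begin

lemma Cov: "- int (D * 2^Q) \<le> z \<Longrightarrow> z < int (C (k+Q)) \<Longrightarrow>
   \<exists>x y. inB (k+Q) x \<and> inA (k+Q) y \<and> z + int x = 2 * int y"
proof (induction Q arbitrary: z)
  case 0
  show ?case
  proof (cases "0 \<le> z")
    case True
    have "nat z < C k" using 0 True by simp
    then obtain x y where xy: "inA k x" "inA k y" "nat z + x = 2 * y" using G3k[of "nat z" 0] by auto
    thus ?thesis using True inB_k by (intro exI[of _ x] exI[of _ y]) auto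
  next
    case False
    define d where "d = nat (- z)"
    have d: "1 \<le> d" "d \<le> D" using False 0 d_def by auto
    have e: "Suc (k - 1) = k" using k1 by simp
    obtain x y where xy: "inA k x" "inA k y" "2 * y + d = x"
      using Gneg[OF gk DC d, unfolded e] by blast
    thus ?thesis using False inB_k d_def by (intro exI[of _ x] exI[of _ y]) auto
  qed
next
  case (Suc Q)
  define C' where "C' = C (k+Q)"
  have C3: "C (k + Suc Q) = 3 * C'" unfolding C'_def by (rule C_Suc)
  have DQ: "D * 2^Q \<le> C'" unfolding C'_def by (rule DC2)
  have KQ: "K \<le> k + Q" by (rule K_kp)
  have Aup: "inA (k+Q) v \<Longrightarrow> inA (k + Suc Q) v" for v using A_mono[of "k+Q" "k + Suc Q"] by simp
  have AupC: "inA (k+Q) v \<Longrightarrow> inA (k + Suc Q) (C' + v)" for v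
    using A_split[OF KQ] unfolding C'_def by auto
  have Bup: "inB (k+Q) v \<Longrightarrow> inB (k + Suc Q) v" for v using inB_mono[of "k+Q" "k + Suc Q"] by simp
  have EQ: "int (E Q) = int C' + int (D * 2^Q)" unfolding E_def C'_def by simp
  have lo: "- (2 * int (D * 2^Q)) \<le> z" using Suc.prems(1) by simp
  have hi: "z < 3 * int C'" using Suc.prems(2) C3 by simp
  consider "z < - int (D * 2^Q)" | "- int (D * 2^Q) \<le> z \<and> z < int C'"
    | "int C' \<le> z \<and> z < 2 * int C'" | "2 * int C' \<le> z" by linarith
  thus ?case
  proof cases
    case 1
    define dq where "dq = D * 2^Q"
    have DQi: "int dq \<le> int C'" unfolding dq_def by (rule of_nat_le_iff[THEN iffD2, OF DQ])
    have lo': "- (2 * int dq) \<le> z" "z < - int dq" using lo 1 unfolding dq_def by auto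
    define u where "u = nat (z + int C' + int dq)"
    have nn: "0 \<le> z + int C' + int dq" using lo' DQi by linarith
    have u1: "int u = z + int C' + int dq" using nn unfolding u_def by simp
    have "int u < int C'" using u1 lo' by linarith
    hence u2: "u < C (k+Q)" unfolding C'_def by simp
    obtain x y where xy: "inA (k+Q) x" "inA (k+Q) y" "u + x = 2 * y" using G3k[OF u2] by blast
    have "inB (k + Suc Q) (E Q + x)" using XinB[OF xy(1)] .
    moreover have EQ': "int (E Q) = int C' + int dq" using EQ unfolding dq_def by simp
    moreover have "int u + int x = 2 * int y" using xy(3) by (metis of_nat_add of_nat_mult of_nat_numeral)
    ultimately have "z + int (E Q + x) = 2 * int y" using u1 by simp
    thus ?thesis using Aup[OF xy(2)] \<open>inB (k + Suc Q) (E Q + x)\<close> by blast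
  next
    case 2
    obtain x y where "inB (k+Q) x" "inA (k+Q) y" "z + int x = 2 * int y"
      using Suc.IH[of z] 2 unfolding C'_def by blast
    thus ?thesis using Aup Bup by blast
  next
    case 3
    show ?thesis
    proof (cases "z - int C' + int (D * 2^Q) < int C'")
      case True
      define dq where "dq = D * 2^Q"
      have T'1: "z - int C' + int dq < int C'" using True by (simp only: dq_def)
      have T'2: "int C' \<le> z" using 3 by simp
      note T' = T'1 T'2
      define u where "u = nat (z - int C' + int dq)"
      have nn: "0 \<le> z - int C' + int dq" using T' by linarith
      have u1: "int u = z - int C' + int dq" using nn unfolding u_def by simp
      have "int u < int C'" using u1 T' by linarith
      hence u2: "u < C (k+Q)" unfolding C'_def by simp
      obtain x y where xy: "inA (k+Q) x" "inA (k+Q) y" "u + x = 2 * y" using G3k[OF u2] by blast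
      have inb: "inB (k + Suc Q) (E Q + x)" using XinB[OF xy(1)] .
      have EQ': "int (E Q) = int C' + int dq" using EQ unfolding dq_def by simp
      have "int u + int x = 2 * int y" using xy(3) by (metis of_nat_add of_nat_mult of_nat_numeral)
      hence "z + int (E Q + x) = 2 * int (C' + y)" using u1 EQ' unfolding of_nat_add distrib_left by linarith
      thus ?thesis using AupC[OF xy(2)] inb by blast
    next
      case False
      obtain x y where xy: "inB (k+Q) x" "inA (k+Q) y" "(z - 2 * int C') + int x = 2 * int y"
        using Suc.IH[of "z - 2 * int C'"] 3 False unfolding C'_def by fastforce
      have "z + int x = 2 * int (C' + y)" using xy(3) by simp
      thus ?thesis using Bup[OF xy(1)] AupC[OF xy(2)] by blast
    qed
  next
    case 4
    obtain x y where xy: "inB (k+Q) x" "inA (k+Q) y" "(z - 2 * int C') + int x = 2 * int y"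
      using Suc.IH[of "z - 2 * int C'"] 4 hi DQ unfolding C'_def by fastforce
    have "z + int x = 2 * int (C' + y)" using xy(3) by simp
    thus ?thesis using Bup[OF xy(1)] AupC[OF xy(2)] by blast
  qed
qed


end


context bcon
begin

lemma MB_ge: "p \<le> MB p"
proof (cases p)
  case (Suc q)
  have "k + q < 2^(k+q)" by (rule less_exp)
  also have "(2::nat)^(k+q) \<le> a (2^(k+q))" by (rule strict_mono_ge_id[OF sm])
  finally have "Suc q \<le> C (k+q)" unfolding C_def using k1 by simp
  thus ?thesis using Suc by (simp add: E_def)
qed simp

lemma Wlem: "inA k t \<Longrightarrow> \<exists>w. inA (k+q) w \<and> 2 * w + C k = 2 * t + C (k+q)"
proof (induction q)
  case 0 thus ?case by auto
next
  case (Suc q)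
  then obtain w where w: "inA (k+q) w" "2 * w + C k = 2 * t + C (k+q)" by auto
  have "inA (Suc (k+q)) (C (k+q) + w)" using A_split[OF K_kp[of q]] w(1) by blast
  moreover have "2 * (C (k+q) + w) + C k = 2 * t + C (k + Suc q)" using w(2) C_Suc[of q] by simp
  ultimately show ?case by auto
qed

lemma memX: "inA (k+p) w \<Longrightarrow> E p + w \<in> range b"
  using XinB inB_range by blast

lemma coverI: "x \<in> range b \<Longrightarrow> y \<in> range b \<Longrightarrow> x < y \<Longrightarrow> y < m \<Longrightarrow> x + m = 2 * y \<Longrightarrow>
  \<exists>x y. x \<in> range b \<and> y \<in> range b \<and> x < y \<and> y < m \<and> x + m = 2 * y"
  by blast

lemma covb:
  assumes m1: "MB 1 < m" and m2: "m \<notin> range b"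
  shows "\<exists>x y. x \<in> range b \<and> y \<in> range b \<and> x < y \<and> y < m \<and> x + m = 2 * y"
proof -
  define S where "S = {p. MB p < m}"
  have fin: "finite S"
  proof (rule finite_subset[of _ "{..<m}"])
    show "S \<subseteq> {..<m}"
    proof
      fix p assume "p \<in> S"
      hence "MB p < m" unfolding S_def by simp
      thus "p \<in> {..<m}" using MB_ge[of p] by simp
    qed
  qed simp
  have oneS: "1 \<in> S" using m1 unfolding S_def by simp
  define P where "P = Max S"
  have PS: "P \<in> S" unfolding P_def using Max_in[OF fin] oneS by blast
  have P1: "1 \<le> P" unfolding P_def using Max_ge[OF fin oneS] .
  have PM: "\<not> MB (Suc P) < m"
  proof
    assume "MB (Suc P) < m"
    hence "Suc P \<in> S" unfolding S_def by simp
    hence "Suc P \<le> P" unfolding P_def by (rule Max_ge[OF fin])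
    thus False by simp
  qed
  obtain Q where Q: "P = Suc Q" using P1 by (cases P) auto
  have lo: "E Q + N (k+Q) < m" using PS Q unfolding S_def by simp
  have hi: "m \<le> E (Suc Q) + N (k + Suc Q)" using PM Q by simp
  have KQ: "K \<le> k + Q" by (rule K_kp)
  note NCQ = NC_kp[of Q]
  have C3: "C (k + Suc Q) = 3 * C (k+Q)" by (rule C_Suc)
  show ?thesis
  proof (cases "m < E (Suc Q)")
    case True
    define w where "w = m - E Q"
    have w: "m = E Q + w" "N (k+Q) < w" using lo unfolding w_def by auto
    show ?thesis
    proof (cases "w < C (k+Q)")
      case True
      have nA: "\<not> inA (k+Q) w" using A_bound w(2) by fastforce
      from G2[OF good_kp[of Q] True nA] show ?thesis
      proof
        assume "\<exists>x y. inA (k+Q) x \<and> inA (k+Q) y \<and> x < y \<and> y < w \<and> x + w = 2 * y"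
        then obtain x y where xy: "inA (k+Q) x" "inA (k+Q) y" "x < y" "y < w" "x + w = 2 * y" by blast
        have h: "E Q + x < E Q + y" "E Q + y < m" "E Q + x + m = 2 * (E Q + y)" using xy w by auto
        show ?thesis by (rule coverI[OF memX[OF xy(1)] memX[OF xy(2)] h])
      next
        assume "\<exists>x y. inA (k+Q) x \<and> inA (k+Q) y \<and> w + C (k+Q) + x = 2 * y"
        then obtain x y where xy: "inA (k+Q) x" "inA (k+Q) y" "w + C (k+Q) + x = 2 * y" by blast
        have "y \<le> N (k+Q)" using xy(2) by (rule A_bound)
        thus ?thesis using xy(3) NCQ w(2) by simp
      qed
    next
      case False
      define dq where "dq = D * 2^Q"
      have EQ: "E Q = C (k+Q) + dq" unfolding E_def dq_def by simp
      have ES: "E (Suc Q) = 3 * C (k+Q) + 2 * dq" unfolding E_def dq_def using C3 by simp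
      define z where "z = int m - 2 * int (E Q)"
      have z1: "- int (D * 2^Q) \<le> z" using False w(1) EQ unfolding z_def dq_def by simp
      have z2: "z < int (C (k+Q))" using True ES EQ unfolding z_def by simp
      obtain x y where xy: "inB (k+Q) x" "inA (k+Q) y" "z + int x = 2 * int y"
        using Cov[OF z1 z2] by blast
      have e: "x + m = 2 * (E Q + y)" using xy(3) unfolding z_def by simp
      have "x \<le> MB Q" using xy(1) by (rule B_bound)
      hence o1: "x < E Q + y" using MB_lt_E[of Q] by simp
      have "y \<le> N (k+Q)" using xy(2) by (rule A_bound)
      hence o2: "E Q + y < m" using lo by simp
      show ?thesis by (rule coverI[OF inB_range[OF xy(1)] memX[OF xy(2)] o1 o2 e])
    qed
  next
    case False
    define r where "r = m - E (Suc Q)"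
    have r: "m = E (Suc Q) + r" "r \<le> N (k + Suc Q)" using False hi unfolding r_def by auto
    have nA: "\<not> inA (k + Suc Q) r"
    proof
      assume "inA (k + Suc Q) r"
      hence "E (Suc Q) + r \<in> range b" by (rule memX)
      thus False using r(1) m2 by simp
    qed
    have rC: "r < C (k + Suc Q)" using r(2) NC_kp[of "Suc Q"] by simp
    from G2[OF good_kp[of "Suc Q"] rC nA] show ?thesis
    proof
      assume "\<exists>x y. inA (k + Suc Q) x \<and> inA (k + Suc Q) y \<and> x < y \<and> y < r \<and> x + r = 2 * y"
      then obtain x y where xy: "inA (k + Suc Q) x" "inA (k + Suc Q) y" "x < y" "y < r" "x + r = 2 * y"
        by blast
      have h: "E (Suc Q) + x < E (Suc Q) + y" "E (Suc Q) + y < m" "E (Suc Q) + x + m = 2 * (E (Suc Q) + y)"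
        using xy r by auto
      show ?thesis by (rule coverI[OF memX[OF xy(1)] memX[OF xy(2)] h])
    next
      assume "\<exists>x y. inA (k + Suc Q) x \<and> inA (k + Suc Q) y \<and> r + C (k + Suc Q) + x = 2 * y"
      then obtain x y where xy: "inA (k + Suc Q) x" "inA (k + Suc Q) y" "r + C (k + Suc Q) + x = 2 * y"
        by blast
      have "y \<le> N (k + Suc Q)" using xy(2) by (rule A_bound)
      hence rL: "r < L" using xy(3) NC_kp[of "Suc Q"] by simp
      have N0: "L \<le> N k" "N k < C k" using NC_kp[of 0] by auto
      have rCk: "r < C (k+0)" using rL N0 by simp
      have nAk: "\<not> inA (k+0) r" using nA A_mono[of k "k + Suc Q" r] by auto
      from G2[OF good_kp[of 0] rCk nAk] show ?thesis
      proof
        assume "\<exists>x y. inA (k+0) x \<and> inA (k+0) y \<and> x < y \<and> y < r \<and> x + r = 2 * y"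
        then obtain x y where xy: "inA k x" "inA k y" "x < y" "y < r" "x + r = 2 * y" by auto
        have xA: "inA (k + Suc Q) x" "inA (k + Suc Q) y" using xy A_mono[of k "k + Suc Q"] by auto
        have h: "E (Suc Q) + x < E (Suc Q) + y" "E (Suc Q) + y < m" "E (Suc Q) + x + m = 2 * (E (Suc Q) + y)"
          using xy r by auto
        show ?thesis by (rule coverI[OF memX[OF xA(1)] memX[OF xA(2)] h])
      next
        assume "\<exists>x y. inA (k+0) x \<and> inA (k+0) y \<and> r + C (k+0) + x = 2 * y"
        then obtain t1 t2 where t: "inA k t1" "inA k t2" "r + C k + t1 = 2 * t2" by auto
        obtain w where w: "inA (k+Q) w" "2 * w + C k = 2 * t2 + C (k+Q)" using Wlem[OF t(2)] by blast
        have Ck: "C k \<le> C (k+Q)" by (rule C_mono_k)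
        define dq where "dq = D * 2^Q"
        have EQ: "E Q = C (k+Q) + dq" unfolding E_def dq_def by simp
        have ES: "E (Suc Q) = 3 * C (k+Q) + 2 * dq" unfolding E_def dq_def using C3 by simp
        have w2: "2 * w = r + t1 + C (k+Q)" using w(2) t(3) by simp
        have e: "t1 + m = 2 * (E Q + w)" using r(1) ES EQ w2 by simp
        have "t1 \<le> N k" using t(1) by (rule A_bound)
        hence o1: "t1 < E Q + w" using N0 Ck EQ by simp
        have "w \<le> N (k+Q)" using w(1) by (rule A_bound)
        hence o2: "E Q + w < m" using MB_lt_E[of "Suc Q"] r(1) by simp
        have t1b: "t1 \<in> range b" using inB_range inB_k t(1) by blast
        show ?thesis by (rule coverI[OF t1b memX[OF w(1)] o1 o2 e])
      qed
    qed
  qed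
qed

lemma b_MB1: "b (2^(k+1) - 1) = MB 1"
proof -
  have e: "(2::nat)^(k+1) - 1 = 2^(k+0) + (2^k - 1)" by simp
  have "b (2^(k+0) + (2^k - 1)) = E 0 + a (2^k - 1)" by (rule b_blk) simp
  thus ?thesis unfolding e by (simp add: N_def)
qed

lemma stanley_b: "stanley b"
  by (rule stanley_intro[OF b_sm b0 tf_b, of "2^(k+1) - 1"]) (use covb b_MB1 in auto)

lemma reg_b1: "Suc k \<le> j \<Longrightarrow> i < 2^j \<Longrightarrow> b (2^j + i) = b (2^j) + a i"
proof -
  assume j: "Suc k \<le> j" and i: "i < 2^j"
  obtain d where "j = Suc k + d" using le_Suc_ex[OF j] by blast
  hence p: "j = k + Suc d" by simp
  show ?thesis using b_blk[of i "Suc d"] b_blk0[of "Suc d"] i p by simp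
qed

lemma reg_b2: "Suc k \<le> j \<Longrightarrow> b (2^j) + L = 2 * b (2^j - 1) + 1"
proof -
  assume j: "Suc k \<le> j"
  obtain q where "j = Suc k + q" using le_Suc_ex[OF j] by blast
  hence q: "j = k + Suc q" by simp
  have e: "(2::nat)^(k + Suc q) - 1 = 2^(k+q) + (2^(k+q) - 1)" by simp
  have "b (2^(k+q) + (2^(k+q) - 1)) = E q + a (2^(k+q) - 1)" by (rule b_blk) simp
  hence b1: "b (2^j - 1) = E q + N (k+q)" unfolding q e by (simp add: N_def)
  have b2: "b (2^j) = E (Suc q)" unfolding q by (rule b_blk0)
  show ?thesis using b1 b2 NC_kp[of q] C_Suc[of q] by (simp add: E_def)
qed

lemma b_at_k: "b (2^k) = C k + D"
  using b_blk0[of 0] by (simp add: E_def)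

end


lemma nat_h1: "nat ((2::int)^j - 0 + int i) = 2^j + i"
proof -
  have "(2::int)^j - 0 + int i = int (2^j + i)" by simp
  thus ?thesis by (simp only: nat_int)
qed

lemma nat_h2: "nat ((2::int)^j - 0) = 2^j"
proof -
  have "(2::int)^j - 0 = int (2^j)" by simp
  thus ?thesis by (simp only: nat_int)
qed

lemma nat_h3: "nat ((2::int)^j - 0 - 1) = 2^j - 1"
proof -
  have "(1::nat) \<le> 2^j" by simp
  hence "(2::int)^j - 0 - 1 = int (2^j - 1)" by (simp add: of_nat_diff)
  thus ?thesis by (simp only: nat_int)
qed

lemma pow_gt: "(j::nat) < 2^j" by (rule less_exp)

theorem mainTheorem17:
  fixes lam :: int
  assumes "lam \<ge> 0"
  shows "{a. stanley a \<and> regular a lam} = {} \<or> infinite {a. stanley a \<and> regular a lam}"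
proof (cases "{a. stanley a \<and> regular a lam} = {}")
  case True thus ?thesis by simp
next
  case False
  define S where "S = {a. stanley a \<and> regular a lam}"
  from False obtain a0 where "regular a0 lam" by auto
  then obtain sig a' where st: "stanley a'" and ind: "Defs.independent a' lam"
    unfolding regular_def by blast
  define L where "L = nat lam"
  have lamL: "lam = int L" using assms L_def by simp
  obtain K where K: "\<forall>k\<ge>K. (\<forall>i<2^k. a' (2^k + i) = a' (2^k) + a' i) \<and>
      int (a' (2^k)) = 2 * int (a' (2^k - 1)) - lam + 1"
    using ind unfolding Defs.independent_def by blast
  have K': "\<forall>j\<ge>K. (\<forall>i<2^j. a' (2^j + i) = a' (2^j) + a' i) \<and> a' (2^j) + L = 2 * a' (2^j - 1) + 1"
  proof (intro allI impI)
    fix j assume j: "K \<le> j"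
    have p1: "\<forall>i<2^j. a' (2^j + i) = a' (2^j) + a' i" using K j by blast
    have "int (a' (2^j)) = 2 * int (a' (2^j - 1)) - int L + 1" using K j lamL by blast
    hence "int (a' (2^j) + L) = int (2 * a' (2^j - 1) + 1)" by simp
    hence "a' (2^j) + L = 2 * a' (2^j - 1) + 1" by (simp only: of_nat_eq_iff)
    thus "(\<forall>i<2^j. a' (2^j + i) = a' (2^j) + a' i) \<and> a' (2^j) + L = 2 * a' (2^j - 1) + 1"
      using p1 by simp
  qed
  obtain k0 where cov: "\<forall>m. a' k0 < m \<and> m \<notin> range a' \<longrightarrow>
           (\<exists>x y. x \<in> range a' \<and> y \<in> range a' \<and> x < y \<and> y < m \<and> x + m = 2 * y)"
    using stanley_cov[OF st] by blast
  have sm: "strict_mono a'" and a00: "a' 0 = 0" using st unfolding stanley_def by auto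
  interpret I: indep_st a' L k0 K
    by unfold_locales (use sm a00 stanley_tf[OF st] cov K' in auto)
  define J where "J = K + a' k0 + 2 * L + 2"
  have ge: "n \<le> a' n" for n by (rule strict_mono_ge_id[OF sm])
  have goodJ: "I.good j" if "J \<le> j" for j
  proof -
    have "j < 2^j" by (rule pow_gt)
    hence "j \<le> 2^j - 1" by linarith
    moreover have "2^j - 1 \<le> a' (2^j - 1)" by (rule ge)
    moreover have "2^j \<le> a' (2^j)" by (rule ge)
    ultimately show ?thesis using that \<open>j < 2^j\<close> unfolding I.good_def I.C_def I.N_def J_def by auto
  qed
  define F where "F k = bseq a' (L+1) k" for k
  have bc: "bcon a' L k0 K k (L+1)" if "Suc J \<le> k" for k
  proof (unfold_locales)
    show "I.good (k - 1)" using goodJ that by simp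
    show "1 \<le> k" using that by simp
    show "L \<le> L + 1" by simp
    show "1 \<le> L + 1" by simp
    have f1: "k - 1 < 2^(k-1)" by (rule pow_gt)
    have f2: "2^(k-1) \<le> a' (2^(k-1))" by (rule ge)
    have f3: "Suc (K + a' k0 + 2 * L + 2) \<le> k" using that unfolding J_def .
    show "L + (L + 1) \<le> I.C (k - 1)" unfolding I.C_def using f1 f2 f3 by linarith
  qed
  have inS: "F k \<in> S" if "Suc J \<le> k" for k
  proof -
    interpret B: bcon a' L k0 K k "L+1" by (rule bc[OF that])
    have bF: "B.b = F k" unfolding B.b_def F_def ..
    have stF: "stanley (F k)" using B.stanley_b bF by simp
    have R: "\<forall>j\<ge>Suc k. (\<forall>i<2^j. F k (nat (2^j - (0::int) + int i)) = F k (nat (2^j - (0::int))) + a' i) \<and>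
        int (F k (nat (2^j - (0::int)))) = 2 * int (F k (nat (2^j - (0::int) - 1))) - lam + 1"
    proof (intro allI impI)
      fix j assume j: "Suc k \<le> j"
      have r1: "\<forall>i<2^j. F k (nat (2^j - (0::int) + int i)) = F k (nat (2^j - (0::int))) + a' i"
        unfolding nat_h1 nat_h2 using B.reg_b1[OF j] bF by simp
      have "B.b (2^j) + L = 2 * B.b (2^j - 1) + 1" by (rule B.reg_b2[OF j])
      hence "int (F k (2^j)) = 2 * int (F k (2^j - 1)) - int L + 1" using bF by simp
      hence r2: "int (F k (nat (2^j - (0::int)))) = 2 * int (F k (nat (2^j - (0::int) - 1))) - lam + 1"
        unfolding nat_h2 nat_h3 lamL .
      show "(\<forall>i<2^j. F k (nat (2^j - (0::int) + int i)) = F k (nat (2^j - (0::int))) + a' i) \<and>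
        int (F k (nat (2^j - (0::int)))) = 2 * int (F k (nat (2^j - (0::int) - 1))) - lam + 1"
        using r1 r2 by blast
    qed
    have "regular (F k) lam"
      unfolding regular_def
      by (intro exI[of _ "0::int"] exI[of _ a'] conjI st ind exI[of _ "Suc k"] R)
    thus ?thesis using stF unfolding S_def by simp
  qed
  have inj: "inj_on F {Suc J..}"
  proof (rule inj_onI)
    fix k1 k2 assume k1: "k1 \<in> {Suc J..}" and k2: "k2 \<in> {Suc J..}" and eq: "F k1 = F k2"
    show "k1 = k2"
    proof (rule ccontr)
      assume ne: "k1 \<noteq> k2"
      have key: "F u \<noteq> F v" if u: "Suc J \<le> u" and uv: "u < v" for u v
      proof
        assume e: "F u = F v"
        interpret B: bcon a' L k0 K u "L+1" by (rule bc[OF u])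
        have "B.b (2^u) = I.C u + (L+1)" by (rule B.b_at_k)
        hence "F u (2^u) = a' (2^u) + (L+1)" unfolding B.b_def F_def I.C_def .
        moreover have "(2::nat)^u < 2^v" using uv by simp
        hence "F v (2^u) = a' (2^u)" unfolding F_def bseq_def by simp
        ultimately show False using e by simp
      qed
      show False
      proof (cases "k1 < k2")
        case True thus False using key[of k1 k2] k1 eq by simp
      next
        case False
        hence "k2 < k1" using ne by simp
        thus False using key[of k2 k1] k2 eq by simp
      qed
    qed
  qed
  have "infinite S"
  proof
    assume "finite S"
    moreover have "F ` {Suc J..} \<subseteq> S" using inS by auto
    ultimately have "finite (F ` {Suc J..})" by (rule finite_subset[rotated])
    hence "finite {Suc J..}" using finite_image_iff[OF inj] by simp
    thus False using infinite_Ici by blast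
  qed
  thus ?thesis unfolding S_def by simp
qed


end
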